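(* Let $\Omega\subset\mathbb{R}^n$ be a domain with $\mathrm{width}(\Omega)<+\infty$, $f\in L^\infty(\Omega)$, $g\in C(\partial\Omega)\cap L^\infty(\partial\Omega)$, $(\varepsilon_i)$ a sequence of positive numbers with $\varepsilon_i\to0$, and for each $i$ let $u_i:\overline\Omega\to\mathbb{R}$ be a bounded solution of $\Delta^{\varepsilon_i}_\infty u_i=\varepsilon_i^2 f$ in $\Omega$, $u_i=g$ on $\partial\Omega$. Then for every $r>0$ there exist $N\in\mathbb{N}$ and a constant $C_r$ (depending on $r$, $\|g\|_\infty$ and $\|f\|_\infty$, but not on $i$) such that for all $i>N$ and all $x,y\in\Omega_r$ with $d(x,y)<\varepsilon_i$, \[ |u_i(x)-u_i(y)|\le C_r\varepsilon_i. \]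
   Context: $d(x,y)$ is the intrinsic metric of $\overline\Omega$ (infimum of lengths of paths in $\overline\Omega$ from $x$ to $y$); $\mathrm{width}(\Omega)=\sup_{x\in\Omega}\inf_{y\in\partial\Omega}d(y,x)$; $\Omega_r=\{x\in\Omega:\ \inf_{y\in\partial\Omega}d(x,y)>r\}$. For $\varepsilon>0$, $B_x(\varepsilon)=\{y\in\overline\Omega: d(x,y)<\varepsilon\}$ and $\Delta^{\varepsilon}_\infty w(x)=\inf_{y\in B_x(\varepsilon)}w(y)+\sup_{y\in B_x(\varepsilon)}w(y)-2w(x)$. *)

theory Defs
  imports "HOL-Analysis.Analysis"
begin

definition path_length :: "(real \<Rightarrow> 'a::metric_space) \<Rightarrow> ereal" where
  "path_length \<gamma> =
     (SUP tk \<in> {(t :: nat \<Rightarrow> real, k :: nat). t 0 = 0 \<and> t k = 1 \<and> (\<forall>j<k. t j \<le> t (Suc j))}.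
        ereal (\<Sum>j<snd tk. dist (\<gamma> (fst tk j)) (\<gamma> (fst tk (Suc j)))))"

definition intrinsic_dist :: "'a::euclidean_space set \<Rightarrow> 'a \<Rightarrow> 'a \<Rightarrow> ereal" where
  "intrinsic_dist \<Omega> x y =
     (INF \<gamma> \<in> {\<gamma>. path \<gamma> \<and> path_image \<gamma> \<subseteq> closure \<Omega> \<and> pathstart \<gamma> = x \<and> pathfinish \<gamma> = y}.
        path_length \<gamma>)"

definition dist_to_boundary :: "'a::euclidean_space set \<Rightarrow> 'a \<Rightarrow> ereal" where
  "dist_to_boundary \<Omega> x = (INF y \<in> frontier \<Omega>. intrinsic_dist \<Omega> y x)"

definition width :: "'a::euclidean_space set \<Rightarrow> ereal" where
  "width \<Omega> = (SUP x \<in> \<Omega>. dist_to_boundary \<Omega> x)"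

definition inner_set :: "'a::euclidean_space set \<Rightarrow> real \<Rightarrow> 'a set" where
  "inner_set \<Omega> r = {x \<in> \<Omega>. (INF y \<in> frontier \<Omega>. intrinsic_dist \<Omega> x y) > ereal r}"

definition intr_ball :: "'a::euclidean_space set \<Rightarrow> 'a \<Rightarrow> real \<Rightarrow> 'a set" where
  "intr_ball \<Omega> x \<epsilon> = {y \<in> closure \<Omega>. intrinsic_dist \<Omega> x y < ereal \<epsilon>}"

definition eps_inf_laplacian ::
    "'a::euclidean_space set \<Rightarrow> real \<Rightarrow> ('a \<Rightarrow> real) \<Rightarrow> 'a \<Rightarrow> real" where
  "eps_inf_laplacian \<Omega> \<epsilon> w x =
     (INF y \<in> intr_ball \<Omega> x \<epsilon>. w y) + (SUP y \<in> intr_ball \<Omega> x \<epsilon>. w y) - 2 * w x"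

end

theory Submission
  imports Defs
begin

lemma path_length_ge_dist: "ereal (dist (\<gamma> 0) (\<gamma> 1)) \<le> path_length \<gamma>"
  unfolding path_length_def
proof (rule SUP_upper2)
  show "((\<lambda>j::nat. if j = 0 then 0 else (1::real)), 1::nat) \<in> {(t :: nat \<Rightarrow> real, k :: nat). t 0 = 0 \<and> t k = 1 \<and> (\<forall>j<k. t j \<le> t (Suc j))}"
    by auto
qed simp

lemma dist_linepath_pts: "dist (linepath a b s) (linepath a b s') = \<bar>s - s'\<bar> * dist a b"
proof -
  have "linepath a b s - linepath a b s' = (s' - s) *\<^sub>R (a - b)"
    unfolding linepath_def by (simp add: algebra_simps)
  then show ?thesis by (simp add: dist_norm abs_minus_commute)
qed

lemma path_length_linepath: "path_length (linepath a b) \<le> ereal (dist a b)"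
  unfolding path_length_def
proof (rule SUP_least)
  fix tk assume "tk \<in> {(t :: nat \<Rightarrow> real, k :: nat). t 0 = 0 \<and> t k = 1 \<and> (\<forall>j<k. t j \<le> t (Suc j))}"
  then obtain t k where tk: "tk = (t,k)" "t 0 = 0" "t k = 1" "\<forall>j<k. t j \<le> t (Suc j)" by auto
  have "(\<Sum>j<k. dist (linepath a b (t j)) (linepath a b (t (Suc j)))) = (\<Sum>j<k. (t (Suc j) - t j) * dist a b)"
    using tk(4) by (intro sum.cong) (auto simp: dist_linepath_pts)
  also have "\<dots> = (\<Sum>j<k. t (Suc j) - t j) * dist a b" by (simp add: sum_distrib_right)
  also have "\<dots> = dist a b" by (simp add: sum_lessThan_telescope tk)
  finally show "ereal (\<Sum>j<snd tk. dist (linepath a b (fst tk j)) (linepath a b (fst tk (Suc j)))) \<le> ereal (dist a b)"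
    using tk by simp
qed

lemma intr_ge_dist: "ereal (dist x y) \<le> intrinsic_dist \<Omega> x y"
  unfolding intrinsic_dist_def
proof (rule INF_greatest)
  fix \<gamma> assume "\<gamma> \<in> {\<gamma>. path \<gamma> \<and> path_image \<gamma> \<subseteq> closure \<Omega> \<and> pathstart \<gamma> = x \<and> pathfinish \<gamma> = y}"
  then have "\<gamma> 0 = x" "\<gamma> 1 = y" by (auto simp: pathstart_def pathfinish_def)
  then show "ereal (dist x y) \<le> path_length \<gamma>" using path_length_ge_dist[of \<gamma>] by simp
qed

lemma intr_le_seg: "closed_segment x y \<subseteq> closure \<Omega> \<Longrightarrow> intrinsic_dist \<Omega> x y \<le> ereal (dist x y)"
  unfolding intrinsic_dist_def
  by (rule INF_lower2[of "linepath x y"]) (auto simp: path_length_linepath)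

lemma intr_lt_dist: "intrinsic_dist \<Omega> x y < ereal e \<Longrightarrow> dist x y < e"
proof -
  assume h: "intrinsic_dist \<Omega> x y < ereal e"
  have "ereal (dist x y) < ereal e" using le_less_trans[OF intr_ge_dist h] .
  then show ?thesis by simp
qed

lemma ball_sub:
  fixes \<Omega> :: "'a::euclidean_space set"
  assumes "open \<Omega>" "x \<in> \<Omega>" "dist x z < infdist x (frontier \<Omega>)"
  shows "z \<in> \<Omega>"
proof (rule ccontr)
  assume nz: "z \<notin> \<Omega>"
  have "closed_segment x z \<inter> frontier \<Omega> \<noteq> {}"
    by (rule connected_Int_frontier) (use assms nz in auto)
  then obtain w where w: "w \<in> closed_segment x z" "w \<in> frontier \<Omega>" by auto
  have "dist w x \<le> dist x z" using dist_in_closed_segment[OF w(1)] by simp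
  moreover have "infdist x (frontier \<Omega>) \<le> dist x w" using infdist_le[OF w(2)] .
  ultimately show False using assms(3) by (simp add: dist_commute)
qed

lemma E_pos:
  assumes "open \<Omega>" "frontier \<Omega> \<noteq> {}" "x \<in> \<Omega>"
  shows "infdist x (frontier \<Omega>) > 0"
proof (rule infdist_pos_not_in_closed)
  show "x \<notin> frontier \<Omega>" using assms by (simp add: frontier_def interior_open)
qed (use assms in auto)

lemma seg_cl:
  fixes \<Omega> :: "'a::euclidean_space set"
  assumes "open \<Omega>" "frontier \<Omega> \<noteq> {}" "x \<in> \<Omega>" "dist x y \<le> infdist x (frontier \<Omega>)"
  shows "closed_segment x y \<subseteq> closure \<Omega>"
proof -
  let ?e = "infdist x (frontier \<Omega>)"
  have e: "?e > 0" using E_pos assms by blast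
  have "ball x ?e \<subseteq> \<Omega>" using ball_sub[OF assms(1,3)] by auto
  then have "closure (ball x ?e) \<subseteq> closure \<Omega>" by (rule closure_mono)
  then have c: "cball x ?e \<subseteq> closure \<Omega>" using e by simp
  have "closed_segment x y \<subseteq> cball x ?e"
    by (rule closed_segment_subset) (use assms(4) e in auto)
  then show ?thesis using c by auto
qed

lemma self_in_ball:
  assumes "x \<in> closure \<Omega>" "0 < e"
  shows "x \<in> intr_ball \<Omega> x e"
proof -
  have "intrinsic_dist \<Omega> x x \<le> ereal (dist x x)"
    by (rule intr_le_seg) (use assms in auto)
  also have "\<dots> < ereal e" using assms by simp
  finally show ?thesis using assms unfolding intr_ball_def by auto
qed

lemma inner_E:
  fixes \<Omega> :: "'a::euclidean_space set"
  assumes "open \<Omega>" "frontier \<Omega> \<noteq> {}" "x \<in> inner_set \<Omega> r"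
  shows "r < infdist x (frontier \<Omega>)"
proof -
  have x: "x \<in> \<Omega>" and lt: "ereal r < (INF y \<in> frontier \<Omega>. intrinsic_dist \<Omega> x y)"
    using assms(3) unfolding inner_set_def by auto
  obtain b where b: "b \<in> frontier \<Omega>" "infdist x (frontier \<Omega>) = dist x b"
    using infdist_attains_inf[OF frontier_closed assms(2)] by blast
  have "intrinsic_dist \<Omega> x b \<le> ereal (dist x b)"
    by (rule intr_le_seg, rule seg_cl) (use assms x b in auto)
  moreover have "(INF y \<in> frontier \<Omega>. intrinsic_dist \<Omega> x y) \<le> intrinsic_dist \<Omega> x b"
    by (rule INF_lower) (use b in auto)
  ultimately have "ereal r < ereal (dist x b)" using lt by order
  then show ?thesis using b by simp
qed

lemma E_le_width:
  fixes \<Omega> :: "'a::euclidean_space set"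
  assumes "x \<in> \<Omega>"
  shows "ereal (infdist x (frontier \<Omega>)) \<le> width \<Omega>"
proof -
  have "ereal (infdist x (frontier \<Omega>)) \<le> dist_to_boundary \<Omega> x"
    unfolding dist_to_boundary_def
  proof (rule INF_greatest)
    fix b assume b: "b \<in> frontier \<Omega>"
    have "infdist x (frontier \<Omega>) \<le> dist b x" using infdist_le[OF b, of x] by (simp add: dist_commute)
    then show "ereal (infdist x (frontier \<Omega>)) \<le> intrinsic_dist \<Omega> b x"
      using intr_ge_dist[of b x \<Omega>] by (meson ereal_less_eq(3) order_trans)
  qed
  also have "\<dots> \<le> width \<Omega>" unfolding width_def by (rule SUP_upper) (rule assms)
  finally show ?thesis .
qed

lemma frontier_ne:
  fixes \<Omega> :: "'a::euclidean_space set"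
  assumes "\<Omega> \<noteq> {}" "width \<Omega> < \<infinity>"
  shows "frontier \<Omega> \<noteq> {}"
proof
  assume "frontier \<Omega> = {}"
  then have "width \<Omega> = \<infinity>" using assms(1) unfolding width_def dist_to_boundary_def by (simp add: top_ereal_def)
  then show False using assms(2) by simp
qed

lemma hmono:
  fixes a s t :: real
  assumes "0 \<le> s" "s \<le> t" "s + t \<le> a"
  shows "a * s - s\<^sup>2 \<le> a*t - t\<^sup>2"
proof -
  have "0 \<le> (t - s) * (a - t - s)" using assms by (intro mult_nonneg_nonneg) auto
  then show ?thesis by (simp add: power2_eq_square algebra_simps)
qed

lemma upper_bound:
  fixes \<Omega> :: "'a::euclidean_space set" and w \<phi> :: "'a \<Rightarrow> real"
  assumes op: "open \<Omega>" and fne: "frontier \<Omega> \<noteq> {}"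
    and W: "\<And>x. x \<in> \<Omega> \<Longrightarrow> infdist x (frontier \<Omega>) \<le> W" and W0: "0 \<le> W"
    and ep: "0 < \<epsilon>" "\<epsilon> \<le> 1"
    and F: "\<And>x. x \<in> \<Omega> \<Longrightarrow> \<bar>\<phi> x\<bar> \<le> F" and F0: "0 \<le> F"
    and bdd: "bounded (w ` closure \<Omega>)"
    and bd: "\<And>x. x \<in> frontier \<Omega> \<Longrightarrow> w x \<le> G"
    and eq: "\<And>x. x \<in> \<Omega> \<Longrightarrow> (INF y\<in>intr_ball \<Omega> x \<epsilon>. w y) + (SUP y\<in>intr_ball \<Omega> x \<epsilon>. w y) - 2 * w x = \<epsilon>\<^sup>2 * \<phi> x"
  shows "\<forall>z\<in>closure \<Omega>. w z \<le> G + (F+1)*(2*W+4)*W + ((F+1)*(2*(2*W+4)) + F + 1)"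
proof -
  define K where "K = F + 1"
  define a where "a = 2*W+4"
  define h where "h t = a*t - t\<^sup>2" for t
  define E where "E z = infdist z (frontier \<Omega>)" for z
  define v where "v z = G + K * h (E z)" for z
  define C0 where "C0 = K*(2*a) + F + 1"
  have K1: "K \<ge> 1" using F0 by (simp add: K_def)
  have a4: "a \<ge> 4" using W0 by (simp add: a_def)
  have hm: "h s \<le> h t" if "0 \<le> s" "s \<le> t" "t \<le> W + 2" for s t
    unfolding h_def by (rule hmono) (use that in \<open>auto simp: a_def\<close>)
  have h0: "0 \<le> h t" if "0 \<le> t" "t \<le> W + 2" for t
    using hm[of 0 t] that by (simp add: h_def)
  have hle: "h t \<le> a * t" if "0 \<le> t" for t using that by (simp add: h_def)
  have cl: "closure \<Omega> = \<Omega> \<union> frontier \<Omega>" by (simp add: closure_Un_frontier)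
  have E0: "0 \<le> E z" for z by (simp add: E_def infdist_nonneg)
  have EW: "E z \<le> W" if "z \<in> closure \<Omega>" for z
  proof (cases "z \<in> \<Omega>")
    case True then show ?thesis using W by (simp add: E_def)
  next
    case False then have "z \<in> frontier \<Omega>" using that cl by auto
    then show ?thesis using W0 by (simp add: E_def)
  qed
  have vlo: "G \<le> v z" if "z \<in> closure \<Omega>" for z
    using h0[OF E0, of z] EW[OF that] K1 unfolding v_def by simp
  have vhi: "v z \<le> G + K*a*W" if "z \<in> closure \<Omega>" for z
  proof -
    have "a * E z \<le> a * W" using EW[OF that] a4 by (intro mult_left_mono) auto
    then have "h (E z) \<le> a * W" using hle[OF E0, of z] by linarith
    then show ?thesis unfolding v_def using K1 by (simp add: mult.assoc)
  qed
  obtain Mw where Mw: "\<And>z. z \<in> closure \<Omega> \<Longrightarrow> \<bar>w z\<bar> \<le> Mw"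
    using bdd unfolding bounded_iff by auto
  have clne: "closure \<Omega> \<noteq> {}" using fne cl by auto
  define m where "m = (SUP z\<in>closure \<Omega>. w z - v z)"
  have bddm: "bdd_above ((\<lambda>z. w z - v z) ` closure \<Omega>)"
  proof (rule bdd_aboveI2)
    fix z assume "z \<in> closure \<Omega>" then show "w z - v z \<le> Mw - G" using Mw vlo by force
  qed
  have wm: "w z \<le> v z + m" if "z \<in> closure \<Omega>" for z
    using cSUP_upper[OF that bddm] unfolding m_def by simp
  have mC: "m \<le> C0"
  proof (rule ccontr)
    assume "\<not> m \<le> C0"
    then have mC: "m > C0" by simp
    define \<delta> where "\<delta> = min (1/2) (\<epsilon>\<^sup>2/4)"
    have d0: "\<delta> > 0" using ep by (simp add: \<delta>_def)
    have "m - \<delta> < m" using d0 by simp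
    then obtain x where x: "x \<in> closure \<Omega>" "m - \<delta> < w x - v x"
      using less_cSUP_iff[OF clne bddm] unfolding m_def by auto
    have "K * (2*a) > 0" using K1 a4 by (intro mult_pos_pos) auto
    then have C0pos: "C0 \<ge> 1" using F0 by (simp add: C0_def)
    have xO: "x \<in> \<Omega>"
    proof (rule ccontr)
      assume "x \<notin> \<Omega>"
      then have xf: "x \<in> frontier \<Omega>" using x cl by auto
      then have "E x = 0" by (simp add: E_def)
      then have "v x = G" by (simp add: v_def h_def)
      then have "w x - v x \<le> 0" using bd[OF xf] by simp
      moreover have "\<delta> \<le> 1/2" by (simp add: \<delta>_def)
      ultimately show False using x(2) mC C0pos by linarith
    qed
    define B where "B = intr_ball \<Omega> x \<epsilon>"
    have Bsub: "B \<subseteq> closure \<Omega>" by (auto simp: B_def intr_ball_def)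
    have Bne: "B \<noteq> {}" using self_in_ball[OF x(1) ep(1)] by (auto simp: B_def)
    have bddB: "bdd_below (w ` B)" "bdd_above (w ` B)"
    proof -
      show "bdd_below (w ` B)" by (rule bdd_belowI2[where m="-Mw"]) (use Mw Bsub in \<open>force simp: abs_le_iff\<close>)
      show "bdd_above (w ` B)" by (rule bdd_aboveI2[where M="Mw"]) (use Mw Bsub in \<open>force simp: abs_le_iff\<close>)
    qed
    have Ex: "E x \<le> W" using EW[OF x(1)] .
    have supB: "(SUP y\<in>B. w y) \<le> G + K * h (E x + \<epsilon>) + m"
    proof (rule cSUP_least[OF Bne])
      fix z assume z: "z \<in> B"
      then have zc: "z \<in> closure \<Omega>" using Bsub by auto
      have "dist x z < \<epsilon>" using z intr_lt_dist by (auto simp: B_def intr_ball_def)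
      then have "E z < E x + \<epsilon>" using infdist_triangle[of z "frontier \<Omega>" x]
        by (simp add: E_def dist_commute)
      then have "h (E z) \<le> h (E x + \<epsilon>)" using hm[OF E0, of z "E x + \<epsilon>"] Ex ep by simp
      then have "v z \<le> G + K * h (E x + \<epsilon>)" using K1 unfolding v_def by simp
      then show "w z \<le> G + K * h (E x + \<epsilon>) + m" using wm[OF zc] by simp
    qed
    have eqx: "(INF y\<in>B. w y) + (SUP y\<in>B. w y) - 2 * w x = \<epsilon>\<^sup>2 * \<phi> x"
      using eq[OF xO] by (simp add: B_def)
    have phix: "\<epsilon>\<^sup>2 * \<phi> x \<ge> - (\<epsilon>\<^sup>2 * F)"
    proof -
      have "-F \<le> \<phi> x" using F[OF xO] by (simp add: abs_le_iff)
      then have "\<epsilon>\<^sup>2 * (-F) \<le> \<epsilon>\<^sup>2 * \<phi> x" by (intro mult_left_mono) auto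
      then show ?thesis by simp
    qed
    have wx: "w x > v x + m - \<delta>" using x(2) by simp
    obtain b where b: "b \<in> frontier \<Omega>" "E x = dist x b"
      using infdist_attains_inf[OF frontier_closed fne] unfolding E_def by blast
    show False
    proof (cases "E x < \<epsilon>")
      case True
      have "intrinsic_dist \<Omega> x b \<le> ereal (dist x b)"
        by (rule intr_le_seg, rule seg_cl) (use op fne xO b in \<open>auto simp: E_def\<close>)
      also have "\<dots> < ereal \<epsilon>" using True b by simp
      finally have "b \<in> B" using b(1) cl by (auto simp: B_def intr_ball_def)
      then have "(INF y\<in>B. w y) \<le> w b" using bddB by (intro cINF_lower) auto
      then have infB: "(INF y\<in>B. w y) \<le> G" using bd[OF b(1)] by simp
      have "h (E x + \<epsilon>) \<le> h 2" using hm[of "E x + \<epsilon>" 2] E0 True ep W0 by simp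
      also have "h 2 \<le> 2 * a" using hle[of 2] by simp
      finally have h2: "K * h (E x + \<epsilon>) \<le> K * (2*a)" using K1 by simp
      have hx: "K * h (E x) \<ge> 0" using h0[OF E0 ] Ex K1 by simp
      have "v x = G + K * h (E x)" by (simp add: v_def)
      have eps2: "\<epsilon>\<^sup>2 * F \<le> F" using ep F0 by (simp add: mult_left_le_one_le power_le_one)
      have "\<delta> \<le> 1/2" by (simp add: \<delta>_def)
      have "\<epsilon>\<^sup>2 * \<phi> x \<le> G + (G + K * h (E x + \<epsilon>) + m) - 2 * (v x + m - \<delta>)"
        using eqx infB supB wx by (smt (verit))
      also have "\<dots> = K * h (E x + \<epsilon>) - 2 * (K * h (E x)) - m + 2 * \<delta>"
        by (simp add: v_def algebra_simps)
      finally have st: "\<epsilon>\<^sup>2 * \<phi> x \<le> K * h (E x + \<epsilon>) - 2 * (K * h (E x)) - m + 2 * \<delta>" .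
      have "C0 = K * (2*a) + F + 1" by (simp add: C0_def)
      then show False using st h2 hx phix eps2 \<open>\<delta> \<le> 1/2\<close> mC by linarith
    next
      case False
      define e where "e = E x"
      have ee: "\<epsilon> \<le> e" using False by (simp add: e_def)
      define \<eta> where "\<eta> = \<epsilon>\<^sup>2 / (2*K*a)"
      have Ka: "K*a > 0" using K1 a4 by simp
      have eta0: "\<eta> > 0" using ep Ka by (simp add: \<eta>_def)
      have Kn: "K \<noteq> 0" "a \<noteq> 0" using K1 a4 by auto
      have Kaeta: "K*a*\<eta> = \<epsilon>\<^sup>2/2" using Kn by (simp add: \<eta>_def field_simps)
      have eta_le: "\<eta> \<le> \<epsilon>/2"
      proof -
        have "1 * 4 \<le> K*a" using K1 a4 by (intro mult_mono) auto
        then have "\<epsilon> \<le> K*a" using ep by linarith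
        then have "\<epsilon> * \<epsilon> \<le> \<epsilon> * (K*a)" using ep by (intro mult_left_mono) auto
        then have "\<epsilon>\<^sup>2 \<le> \<epsilon> * (K*a)" by (simp add: power2_eq_square)
        then show ?thesis unfolding \<eta>_def using Ka by (simp add: field_simps)
      qed
      define s where "s = \<epsilon> - \<eta>"
      have s0: "0 < s" "s < \<epsilon>" using eta0 eta_le ep by (auto simp: s_def)
      have epos: "e > 0" using ee ep by simp
      define y where "y = x + (s / e) *\<^sub>R (b - x)"
      have nb: "norm (b - x) = e" using b by (simp add: e_def dist_norm norm_minus_commute)
      have dxy: "dist x y = s"
        using s0 epos nb by (simp add: y_def dist_norm)
      have "b - y = (1 - s/e) *\<^sub>R (b - x)" by (simp add: y_def algebra_simps)
      then have dyb: "dist y b = e - s"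
      proof -
        have "dist y b = \<bar>1 - s/e\<bar> * e" using nb by (simp add: dist_norm norm_minus_commute[of y b] \<open>b - y = _\<close>)
        also have "\<bar>1 - s/e\<bar> = 1 - s/e" using s0 ee epos by (simp add: field_simps)
        also have "(1 - s/e) * e = e - s" using epos by (simp add: field_simps)
        finally show ?thesis .
      qed
      have segy: "closed_segment x y \<subseteq> closure \<Omega>"
        by (rule seg_cl) (use op fne xO dxy s0 ee in \<open>auto simp: E_def e_def\<close>)
      have "intrinsic_dist \<Omega> x y \<le> ereal (dist x y)" by (rule intr_le_seg[OF segy])
      also have "\<dots> < ereal \<epsilon>" using dxy s0 by simp
      finally have yB: "y \<in> B" using segy by (auto simp: B_def intr_ball_def)
      then have yc: "y \<in> closure \<Omega>" using Bsub by auto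
      have "(INF y\<in>B. w y) \<le> w y" using bddB yB by (intro cINF_lower) auto
      also have "\<dots> \<le> v y + m" using wm[OF yc] .
      also have "v y \<le> G + K * h (e - s)"
      proof -
        have "E y \<le> e - s" using infdist_le[OF b(1), of y] dyb by (simp add: E_def)
        then have "h (E y) \<le> h (e - s)" using hm[OF E0, of y "e - s"] Ex s0 by (simp add: e_def)
        then show ?thesis using K1 unfolding v_def by simp
      qed
      finally have infB: "(INF y\<in>B. w y) \<le> G + K * h (e - s) + m" by simp
      have "\<epsilon>\<^sup>2 * \<phi> x \<le> (G + K * h (e - s) + m) + (G + K * h (e + \<epsilon>) + m) - 2 * (v x + m - \<delta>)"
        using eqx infB supB wx unfolding e_def by (smt (verit))
      also have "\<dots> = K * (h (e - s) + h (e + \<epsilon>) - 2 * h e) + 2 * \<delta>"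
        by (simp add: v_def e_def algebra_simps)
      also have "h (e - s) + h (e + \<epsilon>) - 2 * h e \<le> a * \<eta> - 2 * \<epsilon>\<^sup>2"
      proof -
        have "h (e - s) + h (e + \<epsilon>) - 2 * h e = a*\<eta> - 2*\<epsilon>\<^sup>2 - \<eta>\<^sup>2 - 2*e*\<eta> + 2*\<epsilon>*\<eta>"
          by (simp add: h_def s_def power2_eq_square algebra_simps)
        moreover have "\<epsilon>*\<eta> \<le> e*\<eta>" using ee eta0 by simp
        moreover have "\<eta>\<^sup>2 \<ge> 0" by simp
        ultimately show ?thesis by linarith
      qed
      then have "K * (h (e - s) + h (e + \<epsilon>) - 2 * h e) \<le> K * (a * \<eta> - 2 * \<epsilon>\<^sup>2)"
        using K1 by simp
      finally have "\<epsilon>\<^sup>2 * \<phi> x \<le> K * a * \<eta> - 2 * K * \<epsilon>\<^sup>2 + 2 * \<delta>"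
        by (simp add: algebra_simps)
      moreover have "2 * \<delta> \<le> \<epsilon>\<^sup>2/2" by (simp add: \<delta>_def)
      ultimately have "- (\<epsilon>\<^sup>2 * F) \<le> \<epsilon>\<^sup>2 - 2 * K * \<epsilon>\<^sup>2" using phix Kaeta by linarith
      then have "\<epsilon>\<^sup>2 * (2*K - 1 - F) \<le> 0" by (simp add: algebra_simps)
      moreover have "\<epsilon>\<^sup>2 * (2*K - 1 - F) > 0" using ep F0 by (simp add: K_def)
      ultimately show False by simp
    qed
  qed
  show ?thesis
  proof
    fix z assume z: "z \<in> closure \<Omega>"
    have "w z \<le> v z + m" by (rule wm[OF z])
    also have "\<dots> \<le> G + K*a*W + C0" using vhi[OF z] mC by simp
    finally show "w z \<le> G + (F+1)*(2*W+4)*W + ((F+1)*(2*(2*W+4)) + F + 1)"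
      by (simp add: K_def a_def C0_def)
  qed
qed

lemma interior_est:
  fixes \<Omega> :: "'a::euclidean_space set" and w \<phi> :: "'a \<Rightarrow> real"
  assumes op: "open \<Omega>" and fne: "frontier \<Omega> \<noteq> {}"
    and ep: "0 < \<epsilon>" "\<epsilon> \<le> 1" "2 * \<epsilon> \<le> r"
    and M: "\<And>z. z \<in> closure \<Omega> \<Longrightarrow> \<bar>w z\<bar> \<le> M"
    and F: "\<And>x. x \<in> \<Omega> \<Longrightarrow> \<bar>\<phi> x\<bar> \<le> F" and F0: "0 \<le> F"
    and eq: "\<And>x. x \<in> \<Omega> \<Longrightarrow> (INF y\<in>intr_ball \<Omega> x \<epsilon>. w y) + (SUP y\<in>intr_ball \<Omega> x \<epsilon>. w y) - 2 * w x = \<epsilon>\<^sup>2 * \<phi> x"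
    and x: "x \<in> \<Omega>" and rx: "r < infdist x (frontier \<Omega>)"
  shows "(SUP y\<in>intr_ball \<Omega> x \<epsilon>. w y) - w x \<le> \<epsilon> * (4*M/r + r*F + 1)"
proof -
  define E where "E = infdist x (frontier \<Omega>)"
  define S where "S z = (SUP y\<in>intr_ball \<Omega> z \<epsilon>. w y) - w z" for z
  have r0: "r > 0" using ep by simp
  have M0: "0 \<le> M" using M[of x] x closure_subset by force
  have Bne: "intr_ball \<Omega> z \<epsilon> \<noteq> {}" if "z \<in> \<Omega>" for z
    using self_in_ball[of z \<Omega> \<epsilon>] that ep closure_subset by blast
  have Bsub: "intr_ball \<Omega> z \<epsilon> \<subseteq> closure \<Omega>" for z by (auto simp: intr_ball_def)
  have bddA: "bdd_above (w ` intr_ball \<Omega> z \<epsilon>)" for z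
    by (rule bdd_aboveI2[where M=M]) (use M Bsub in \<open>force simp: abs_le_iff\<close>)
  have bddB: "bdd_below (w ` intr_ball \<Omega> z \<epsilon>)" for z
    by (rule bdd_belowI2[where m="-M"]) (use M Bsub in \<open>force simp: abs_le_iff\<close>)
  define k where "k = nat \<lfloor>r/\<epsilon>\<rfloor>"
  have re2: "r/\<epsilon> \<ge> 2" using ep by (simp add: field_simps)
  have kfl: "real k = of_int \<lfloor>r/\<epsilon>\<rfloor>" using re2 by (simp add: k_def)
  have k_le: "real k \<le> r/\<epsilon>" using kfl by simp
  have k_gt: "real k > r/\<epsilon> - 1" using kfl by linarith
  have k1: "real k \<ge> 1" using k_gt re2 by simp
  have kr: "real k * \<epsilon> \<le> r" using k_le ep by (simp add: field_simps)
  have k2: "r \<le> 2 * real k * \<epsilon>"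
  proof -
    have "r/\<epsilon> \<le> 2 * real k" using k_gt re2 by linarith
    then show ?thesis using ep by (simp add: field_simps)
  qed
  define L where "L = S x"
  define \<delta> where "\<delta> = \<epsilon>\<^sup>2 / (real k)\<^sup>2"
  define c where "c = \<delta> + \<epsilon>\<^sup>2 * F"
  have d0: "\<delta> > 0" using ep k1 by (simp add: \<delta>_def)
  have c0: "c \<ge> \<delta>" using F0 by (simp add: c_def)
  have rE: "r < E" using rx by (simp add: E_def)
  have claim: "\<exists>z\<in>\<Omega>. dist x z \<le> real j * \<epsilon> \<and> S z \<ge> L - real j * c \<and> w z \<ge> w x + real j * L - (real j)\<^sup>2 * c"
    if "j \<le> k" for j
    using that
  proof (induction j)
    case 0
    then show ?case using x by (auto simp: L_def)
  next
    case (Suc j)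
    then obtain z where z: "z \<in> \<Omega>" "dist x z \<le> real j * \<epsilon>" "S z \<ge> L - real j * c"
      "w z \<ge> w x + real j * L - (real j)\<^sup>2 * c" by auto
    have jk: "real j + 1 \<le> real k" using Suc.prems by simp
    have "(SUP y\<in>intr_ball \<Omega> z \<epsilon>. w y) - \<delta> < (SUP y\<in>intr_ball \<Omega> z \<epsilon>. w y)" using d0 by simp
    then obtain y where y: "y \<in> intr_ball \<Omega> z \<epsilon>" "(SUP y\<in>intr_ball \<Omega> z \<epsilon>. w y) - \<delta> < w y"
      using less_cSUP_iff[OF Bne[OF z(1)] bddA] by blast
    have yc: "y \<in> closure \<Omega>" using y Bsub by auto
    have dzy: "dist z y < \<epsilon>" using y(1) intr_lt_dist by (auto simp: intr_ball_def)
    have "dist x y \<le> dist x z + dist z y" by (rule dist_triangle)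
    also have "\<dots> < (real j + 1) * \<epsilon>" using z(2) dzy by (simp add: algebra_simps)
    also have "\<dots> \<le> real k * \<epsilon>" using jk ep by (intro mult_right_mono) auto
    finally have dxy: "dist x y < E" using kr rE by linarith
    have dxz: "dist x z < E"
    proof -
      have "real j * \<epsilon> \<le> real k * \<epsilon>" using jk ep by (intro mult_right_mono) auto
      then show ?thesis using z(2) kr rE by linarith
    qed
    have yO: "y \<in> \<Omega>" using ball_sub[OF op x] dxy by (simp add: E_def)
    have "closed_segment y z \<subseteq> ball x E"
      by (rule closed_segment_subset) (use dxy dxz in auto)
    also have "ball x E \<subseteq> \<Omega>" using ball_sub[OF op x] by (auto simp: E_def)
    finally have "closed_segment y z \<subseteq> closure \<Omega>" using closure_subset by blast
    then have "intrinsic_dist \<Omega> y z \<le> ereal (dist y z)" by (rule intr_le_seg)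
    also have "\<dots> < ereal \<epsilon>" using dzy by (simp add: dist_commute)
    finally have "z \<in> intr_ball \<Omega> y \<epsilon>" using z(1) closure_subset by (auto simp: intr_ball_def)
    then have infy: "(INF y\<in>intr_ball \<Omega> y \<epsilon>. w y) \<le> w z" using bddB by (intro cINF_lower) auto
    have eqy: "(INF y\<in>intr_ball \<Omega> y \<epsilon>. w y) + (SUP y\<in>intr_ball \<Omega> y \<epsilon>. w y) - 2 * w y = \<epsilon>\<^sup>2 * \<phi> y"
      by (rule eq[OF yO])
    have phiy: "\<epsilon>\<^sup>2 * \<phi> y \<ge> - (\<epsilon>\<^sup>2 * F)"
    proof -
      have "-F \<le> \<phi> y" using F[OF yO] by (simp add: abs_le_iff)
      then have "\<epsilon>\<^sup>2 * (-F) \<le> \<epsilon>\<^sup>2 * \<phi> y" by (intro mult_left_mono) auto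
      then show ?thesis by simp
    qed
    have Sy: "S y \<ge> S z - c"
    proof -
      have "S y = \<epsilon>\<^sup>2 * \<phi> y - (INF y\<in>intr_ball \<Omega> y \<epsilon>. w y) + w y"
        using eqy by (simp add: S_def)
      moreover have "S z = (SUP y\<in>intr_ball \<Omega> z \<epsilon>. w y) - w z" by (simp add: S_def)
      ultimately show ?thesis using phiy infy y(2) by (simp add: c_def)
    qed
    have wy: "w y \<ge> w z + S z - \<delta>" using y(2) by (simp add: S_def)
    have jc: "real j * c \<ge> 0" using c0 d0 by simp
    have sq: "(real (Suc j))\<^sup>2 * c = (real j)\<^sup>2 * c + real j * c + real j * c + c"
      by (simp add: power2_eq_square algebra_simps)
    show ?case
    proof (intro bexI conjI)
      show "y \<in> \<Omega>" by (rule yO)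
      show "dist x y \<le> real (Suc j) * \<epsilon>"
        using dist_triangle[of x y z] z(2) dzy by (simp add: algebra_simps)
      show "S y \<ge> L - real (Suc j) * c" using Sy z(3) by (simp add: algebra_simps)
      show "w y \<ge> w x + real (Suc j) * L - (real (Suc j))\<^sup>2 * c"
        using wy z(3,4) sq jc c0 by (simp add: algebra_simps)
    qed
  qed
  obtain z where z: "z \<in> \<Omega>" "w z \<ge> w x + real k * L - (real k)\<^sup>2 * c"
    using claim[of k] by auto
  have "w z - w x \<le> 2 * M" using M[of z] M[of x] z(1) x closure_subset by (force simp: abs_le_iff)
  moreover have "(real k)\<^sup>2 * c = \<epsilon>\<^sup>2 + (real k)\<^sup>2 * \<epsilon>\<^sup>2 * F"
    using k1 by (simp add: c_def \<delta>_def algebra_simps)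
  ultimately have kL: "real k * L \<le> 2 * M + \<epsilon>\<^sup>2 + (real k)\<^sup>2 * \<epsilon>\<^sup>2 * F" using z(2) by linarith
  define T where "T = \<epsilon> * (4*M/r + r*F + 1)"
  have t1: "2 * M \<le> real k * \<epsilon> * (4*M/r)"
  proof -
    have e1: "real k * \<epsilon> * (4*M/r) = 2 * M * ((2 * real k * \<epsilon>) / r)" by (simp add: field_simps)
    have e2: "(2 * real k * \<epsilon>) / r \<ge> 1" using k2 r0 by (simp add: field_simps)
    have e3: "2 * M * 1 \<le> 2 * M * ((2 * real k * \<epsilon>) / r)"
      using e2 M0 by (intro mult_left_mono) auto
    then have e4: "2 * M \<le> 2 * M * ((2 * real k * \<epsilon>) / r)" by (simp only: mult_1_right)
    show ?thesis by (subst e1) (rule e4)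
  qed
  have t2: "(real k)\<^sup>2 * \<epsilon>\<^sup>2 * F \<le> real k * \<epsilon> * (r * F)"
  proof -
    have "0 \<le> real k * \<epsilon> * F * (r - real k * \<epsilon>)" using kr ep F0 k1 by simp
    then show ?thesis by (simp add: power2_eq_square algebra_simps)
  qed
  have t3: "\<epsilon>\<^sup>2 \<le> real k * \<epsilon>"
  proof -
    have "\<epsilon> * \<epsilon> \<le> real k * \<epsilon>" using ep k1 by (intro mult_right_mono) auto
    then show ?thesis by (simp add: power2_eq_square)
  qed
  have "real k * T = real k * \<epsilon> * (4*M/r) + real k * \<epsilon> * (r * F) + real k * \<epsilon>"
    by (simp add: T_def algebra_simps)
  then have "real k * L \<le> real k * T" using kL t1 t2 t3 by linarith
  then have "L \<le> T" using k1 by simp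
  then show ?thesis by (simp add: L_def S_def T_def)
qed

theorem lemma5p2:
  fixes \<Omega> :: "'a::euclidean_space set"
    and f :: "'a \<Rightarrow> real" and g :: "'a \<Rightarrow> real"
    and \<epsilon> :: "nat \<Rightarrow> real" and u :: "nat \<Rightarrow> 'a \<Rightarrow> real"
  assumes dom: "open \<Omega>" "connected \<Omega>" "\<Omega> \<noteq> {}"
    and wid: "width \<Omega> < \<infinity>"
    and f_meas: "f \<in> borel_measurable (lebesgue_on \<Omega>)"
    and f_bdd: "bounded (f ` \<Omega>)"
    and g_cont: "continuous_on (frontier \<Omega>) g"
    and g_bdd: "bounded (g ` frontier \<Omega>)"
    and eps_pos: "\<And>i. \<epsilon> i > 0"
    and eps_lim: "\<epsilon> \<longlonglongrightarrow> 0"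
    and u_bdd: "\<And>i. bounded (u i ` closure \<Omega>)"
    and u_eq: "\<And>i x. x \<in> \<Omega> \<Longrightarrow> eps_inf_laplacian \<Omega> (\<epsilon> i) (u i) x = (\<epsilon> i)\<^sup>2 * f x"
    and u_bd: "\<And>i x. x \<in> frontier \<Omega> \<Longrightarrow> u i x = g x"
  shows "\<forall>r>0. \<exists>N::nat. \<exists>C::real. \<forall>i>N. \<forall>x\<in>inner_set \<Omega> r. \<forall>y\<in>inner_set \<Omega> r.
           intrinsic_dist \<Omega> x y < ereal (\<epsilon> i) \<longrightarrow> \<bar>u i x - u i y\<bar> \<le> C * \<epsilon> i"
proof (intro allI impI)
  fix r :: real assume r0: "r > 0"
  have op: "open \<Omega>" by (rule dom(1))
  have fne: "frontier \<Omega> \<noteq> {}" by (rule frontier_ne[OF dom(3) wid])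
  obtain x0 where x0: "x0 \<in> \<Omega>" using dom(3) by auto
  have wlo: "ereal (infdist x0 (frontier \<Omega>)) \<le> width \<Omega>" by (rule E_le_width[OF x0])
  obtain W where W: "width \<Omega> = ereal W"
    using wid wlo by (cases "width \<Omega>") auto
  have EW: "\<And>x. x \<in> \<Omega> \<Longrightarrow> infdist x (frontier \<Omega>) \<le> W"
    using E_le_width W by fastforce
  have W0: "0 \<le> W" using EW[OF x0] infdist_nonneg[of x0 "frontier \<Omega>"] by linarith
  obtain Fb where Fb: "\<And>x. x \<in> \<Omega> \<Longrightarrow> \<bar>f x\<bar> \<le> Fb"
    using f_bdd unfolding bounded_iff by auto
  define F where "F = max Fb 0"
  have F: "\<And>x. x \<in> \<Omega> \<Longrightarrow> \<bar>f x\<bar> \<le> F" using Fb by (force simp: F_def)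
  have F0: "0 \<le> F" by (simp add: F_def)
  obtain Gb where Gb: "\<And>x. x \<in> frontier \<Omega> \<Longrightarrow> \<bar>g x\<bar> \<le> Gb"
    using g_bdd unfolding bounded_iff by auto
  define G where "G = max Gb 0"
  have G: "\<And>x. x \<in> frontier \<Omega> \<Longrightarrow> \<bar>g x\<bar> \<le> G" using Gb by (force simp: G_def)
  define Mb where "Mb = G + (F+1)*(2*W+4)*W + ((F+1)*(2*(2*W+4)) + F + 1)"
  have Bsub: "intr_ball \<Omega> z e \<subseteq> closure \<Omega>" for z e by (auto simp: intr_ball_def)
  have Bne: "intr_ball \<Omega> z (\<epsilon> i) \<noteq> {}" if "z \<in> \<Omega>" for z i
    using self_in_ball[of z \<Omega> "\<epsilon> i"] that eps_pos closure_subset by blast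
  have bddA: "bdd_above (u i ` intr_ball \<Omega> z e)" for i z e
  proof -
    obtain Mu where "\<And>z. z \<in> closure \<Omega> \<Longrightarrow> \<bar>u i z\<bar> \<le> Mu" using u_bdd[of i] unfolding bounded_iff by auto
    then show ?thesis by (intro bdd_aboveI2[where M=Mu]) (use Bsub in \<open>force simp: abs_le_iff\<close>)
  qed
  have bddB: "bdd_below (u i ` intr_ball \<Omega> z e)" for i z e
  proof -
    obtain Mu where "\<And>z. z \<in> closure \<Omega> \<Longrightarrow> \<bar>u i z\<bar> \<le> Mu" using u_bdd[of i] unfolding bounded_iff by auto
    then show ?thesis by (intro bdd_belowI2[where m="-Mu"]) (use Bsub in \<open>force simp: abs_le_iff\<close>)
  qed
  have eqi: "\<And>x. x \<in> \<Omega> \<Longrightarrow> (INF y\<in>intr_ball \<Omega> x (\<epsilon> i). u i y) + (SUP y\<in>intr_ball \<Omega> x (\<epsilon> i). u i y) - 2 * u i x = (\<epsilon> i)\<^sup>2 * f x" for i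
    using u_eq unfolding eps_inf_laplacian_def by blast
  have ubound: "\<bar>u i z\<bar> \<le> Mb" if i1: "\<epsilon> i \<le> 1" and z: "z \<in> closure \<Omega>" for i z
  proof -
    have up: "\<forall>z\<in>closure \<Omega>. u i z \<le> Mb"
      unfolding Mb_def
    proof (rule upper_bound[OF op fne EW W0 eps_pos i1 F F0 u_bdd])
      show "\<And>x. x \<in> frontier \<Omega> \<Longrightarrow> u i x \<le> G" using G u_bd by (force simp: abs_le_iff)
      show "\<And>x. x \<in> \<Omega> \<Longrightarrow> (INF y\<in>intr_ball \<Omega> x (\<epsilon> i). u i y) + (SUP y\<in>intr_ball \<Omega> x (\<epsilon> i). u i y) - 2 * u i x = (\<epsilon> i)\<^sup>2 * f x"
        by (rule eqi)
    qed
    have lo: "\<forall>z\<in>closure \<Omega>. (\<lambda>z. - u i z) z \<le> Mb"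
      unfolding Mb_def
    proof (rule upper_bound[OF op fne EW W0 eps_pos i1, where \<phi>="\<lambda>x. - f x"])
      show "\<And>x. x \<in> \<Omega> \<Longrightarrow> \<bar>- f x\<bar> \<le> F" using F by simp
      show "0 \<le> F" by (rule F0)
      show "bounded ((\<lambda>z. - u i z) ` closure \<Omega>)"
      proof -
        obtain Mu where "\<And>z. z \<in> closure \<Omega> \<Longrightarrow> \<bar>u i z\<bar> \<le> Mu" using u_bdd[of i] unfolding bounded_iff by auto
        then show ?thesis unfolding bounded_iff by (intro exI[of _ Mu]) auto
      qed
      show "\<And>x. x \<in> frontier \<Omega> \<Longrightarrow> - u i x \<le> G" using G u_bd by (force simp: abs_le_iff)
      fix x assume x: "x \<in> \<Omega>"
      have a1: "- (SUP y\<in>intr_ball \<Omega> x (\<epsilon> i). u i y) = (INF y\<in>intr_ball \<Omega> x (\<epsilon> i). - u i y)"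
        by (rule uminus_cSUP[OF bddA Bne[OF x]])
      have a2: "- (INF y\<in>intr_ball \<Omega> x (\<epsilon> i). u i y) = (SUP y\<in>intr_ball \<Omega> x (\<epsilon> i). - u i y)"
        by (rule uminus_cINF[OF bddB Bne[OF x]])
      show "(INF y\<in>intr_ball \<Omega> x (\<epsilon> i). - u i y) + (SUP y\<in>intr_ball \<Omega> x (\<epsilon> i). - u i y) - 2 * - u i x = (\<epsilon> i)\<^sup>2 * - f x"
      proof -
        have m: "(\<epsilon> i)\<^sup>2 * - f x = - ((\<epsilon> i)\<^sup>2 * f x)" by simp
        show ?thesis unfolding m a1[symmetric] a2[symmetric] using eqi[OF x, of i] by linarith
      qed
    qed
    show ?thesis using up lo z by (force simp: abs_le_iff)
  qed
  have "eventually (\<lambda>i. \<epsilon> i < min 1 (r/2)) sequentially"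
    by (rule order_tendstoD(2)[OF eps_lim]) (use r0 in simp)
  then obtain N where N: "\<And>i. i \<ge> N \<Longrightarrow> \<epsilon> i < min 1 (r/2)"
    unfolding eventually_sequentially by auto
  define C1 where "C1 = 4*Mb/r + r*F + 1"
  show "\<exists>N::nat. \<exists>C::real. \<forall>i>N. \<forall>x\<in>inner_set \<Omega> r. \<forall>y\<in>inner_set \<Omega> r.
           intrinsic_dist \<Omega> x y < ereal (\<epsilon> i) \<longrightarrow> \<bar>u i x - u i y\<bar> \<le> C * \<epsilon> i"
  proof (intro exI allI impI ballI)
    fix i x y assume i: "N < i" and x: "x \<in> inner_set \<Omega> r" and y: "y \<in> inner_set \<Omega> r"
      and dxy: "intrinsic_dist \<Omega> x y < ereal (\<epsilon> i)"
    have ei: "\<epsilon> i \<le> 1" "2 * \<epsilon> i \<le> r" using N[of i] i by auto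
    have xO: "x \<in> \<Omega>" and yO: "y \<in> \<Omega>" using x y by (auto simp: inner_set_def)
    have rx: "r < infdist x (frontier \<Omega>)" by (rule inner_E[OF op fne x])
    have est: "(SUP y\<in>intr_ball \<Omega> x (\<epsilon> i). u i y) - u i x \<le> \<epsilon> i * C1"
      unfolding C1_def
      by (rule interior_est[OF op fne eps_pos ei ubound[OF ei(1)] F F0 eqi xO rx]) 
    have yB: "y \<in> intr_ball \<Omega> x (\<epsilon> i)" using yO closure_subset dxy by (auto simp: intr_ball_def)
    have "u i y \<le> (SUP y\<in>intr_ball \<Omega> x (\<epsilon> i). u i y)" by (rule cSUP_upper[OF yB bddA])
    moreover have "(INF y\<in>intr_ball \<Omega> x (\<epsilon> i). u i y) \<le> u i y" by (rule cINF_lower[OF bddB yB])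
    moreover have "(\<epsilon> i)\<^sup>2 * f x \<ge> - (\<epsilon> i * F)"
    proof -
      have "- F \<le> f x" using F[OF xO] by (simp add: abs_le_iff)
      then have "(\<epsilon> i)\<^sup>2 * (-F) \<le> (\<epsilon> i)\<^sup>2 * f x" by (intro mult_left_mono) auto
      moreover have "(\<epsilon> i)\<^sup>2 * F \<le> \<epsilon> i * F"
      proof -
        have "\<epsilon> i * \<epsilon> i \<le> \<epsilon> i * 1" using ei eps_pos[of i] by (intro mult_left_mono) auto
        then show ?thesis using F0 by (simp add: power2_eq_square mult_right_mono)
      qed
      ultimately show ?thesis by simp
    qed
    ultimately have "u i y - u i x \<le> \<epsilon> i * C1" "u i x - u i y \<le> \<epsilon> i * C1 + \<epsilon> i * F"
      using est eqi[OF xO, of i] by (smt (verit))+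
    moreover have "0 \<le> \<epsilon> i * F" using F0 eps_pos[of i] by simp
    moreover have "(C1 + F) * \<epsilon> i = \<epsilon> i * C1 + \<epsilon> i * F" by (simp add: algebra_simps)
    ultimately show "\<bar>u i x - u i y\<bar> \<le> (C1 + F) * \<epsilon> i" unfolding abs_le_iff by linarith
  qed
qed

end
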